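(* Let $\Theta$ be a variety of algebras and let $H\in\Theta$ be a finitely generated algebra that contains no proper subalgebra isomorphic to $H$. Then every algebra $G\in\Theta$ isotyped to $H$ is isomorphic to $H$.
   Context: $X^0=\{x_1,x_2,\dots\}$ is an infinite set of variables; for finite $X\subset X^0$, $W(X)$ is the free $\Theta$-algebra on $X$; homomorphisms $W(X)\to H$ are points. For each finite $X$, the set $\Phi(X)$ of formulas of sort $X$ is defined inductively: equalities $w\equiv w'$ ($w,w'\in W(X)$) are in $\Phi(X)$; $\Phi(X)$ is closed under $\neg,\vee,\wedge$ and $\exists x$ for $x\in X$; and for each homomorphism $s:W(X)\to W(Y)$ and $u\in\Phi(X)$, $s_*u\in\Phi(Y)$. Values $Val^X_H(u)\subseteq\mathrm{Hom}(W(X),H)$: $Val^X_H(w\equiv w')=\{\mu:\mu(w)=\mu(w')\}$; $\mu\in Val^X_H(\exists x\,u)$ iff some point $\nu$ agreeing with $\mu$ on $X\setminus\{x\}$ lies in $Val^X_H(u)$; $\vee,\wedge,\neg$ are union, intersection, complement; $\mu\in Val^Y_H(s_*u)$ iff $\mu\circ s\in Val^X_H(u)$. The logical kernel of $\mu:W(X)\to H$ is $LKer(\mu)=\{u\in\Phi(X):\mu\in Val^X_H(u)\}$; a set $T\subseteq\Phi(X)$ is an $X$-type of $H$ if $T=LKer(\mu)$ for some point $\mu:W(X)\to H$. Algebras $H_1,H_2\in\Theta$ are isotyped if for every finite $X\subset X^0$, every $X$-type of $H_1$ is an $X$-type of $H_2$ and vice versa. *)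

theory Defs
  imports "HOL-Library.FuncSet"
begin

text \<open>A signature is given by an arity function ar :: 'f => nat.
  Variables are X0 = nat (x_i corresponds to i).\<close>

datatype 'f trm = Var nat | App 'f "'f trm list"

record ('f, 'a) alg =
  acarrier :: "'a set"
  aops :: "'f \<Rightarrow> 'a list \<Rightarrow> 'a"

fun eval :: "('f, 'a) alg \<Rightarrow> (nat \<Rightarrow> 'a) \<Rightarrow> 'f trm \<Rightarrow> 'a" where
  "eval A \<mu> (Var v) = \<mu> v"
| "eval A \<mu> (App f ts) = aops A f (map (eval A \<mu>) ts)"

fun wf_term :: "('f \<Rightarrow> nat) \<Rightarrow> nat set \<Rightarrow> 'f trm \<Rightarrow> bool" where
  "wf_term ar X (Var v) = (v \<in> X)"
| "wf_term ar X (App f ts) = (length ts = ar f \<and> list_all (wf_term ar X) ts)"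

definition is_alg :: "('f \<Rightarrow> nat) \<Rightarrow> ('f, 'a) alg \<Rightarrow> bool" where
  "is_alg ar A \<longleftrightarrow> (\<forall>f as. length as = ar f \<and> set as \<subseteq> acarrier A \<longrightarrow> aops A f as \<in> acarrier A)"

definition satisfies :: "('f, 'a) alg \<Rightarrow> ('f trm \<times> 'f trm) set \<Rightarrow> bool" where
  "satisfies A E \<longleftrightarrow> (\<forall>(l, r) \<in> E. \<forall>\<mu>. (\<forall>v. \<mu> v \<in> acarrier A) \<longrightarrow> eval A \<mu> l = eval A \<mu> r)"

text \<open>A variety (Birkhoff: equational class) is given by a set of identities E.\<close>
definition variety :: "('f \<Rightarrow> nat) \<Rightarrow> ('f trm \<times> 'f trm) set \<Rightarrow> bool" where
  "variety ar E \<longleftrightarrow> (\<forall>(l, r) \<in> E. wf_term ar UNIV l \<and> wf_term ar UNIV r)"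

definition in_variety :: "('f \<Rightarrow> nat) \<Rightarrow> ('f trm \<times> 'f trm) set \<Rightarrow> ('f, 'a) alg \<Rightarrow> bool" where
  "in_variety ar E A \<longleftrightarrow> is_alg ar A \<and> satisfies A E"

definition is_hom :: "('f \<Rightarrow> nat) \<Rightarrow> ('f, 'a) alg \<Rightarrow> ('f, 'b) alg \<Rightarrow> ('a \<Rightarrow> 'b) \<Rightarrow> bool" where
  "is_hom ar A B h \<longleftrightarrow> (\<forall>x \<in> acarrier A. h x \<in> acarrier B) \<and>
     (\<forall>f as. length as = ar f \<and> set as \<subseteq> acarrier A \<longrightarrow> h (aops A f as) = aops B f (map h as))"

definition isomorphic :: "('f \<Rightarrow> nat) \<Rightarrow> ('f, 'a) alg \<Rightarrow> ('f, 'b) alg \<Rightarrow> bool" where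
  "isomorphic ar A B \<longleftrightarrow> (\<exists>h. is_hom ar A B h \<and> bij_betw h (acarrier A) (acarrier B))"

definition subalg :: "('f \<Rightarrow> nat) \<Rightarrow> 'a set \<Rightarrow> ('f, 'a) alg \<Rightarrow> bool" where
  "subalg ar S A \<longleftrightarrow> S \<subseteq> acarrier A \<and> (\<forall>f as. length as = ar f \<and> set as \<subseteq> S \<longrightarrow> aops A f as \<in> S)"

definition no_proper_iso_subalg :: "('f \<Rightarrow> nat) \<Rightarrow> ('f, 'a) alg \<Rightarrow> bool" where
  "no_proper_iso_subalg ar A \<longleftrightarrow>
     (\<forall>S. subalg ar S A \<and> S \<noteq> acarrier A \<longrightarrow> \<not> isomorphic ar (A\<lparr>acarrier := S\<rparr>) A)"

inductive_set generated :: "('f \<Rightarrow> nat) \<Rightarrow> ('f, 'a) alg \<Rightarrow> 'a set \<Rightarrow> 'a set"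
  for ar A S where
  gen_base: "x \<in> S \<Longrightarrow> x \<in> generated ar A S"
| gen_op: "length as = ar f \<Longrightarrow> \<forall>a \<in> set as. a \<in> generated ar A S \<Longrightarrow> aops A f as \<in> generated ar A S"

definition fin_generated :: "('f \<Rightarrow> nat) \<Rightarrow> ('f, 'a) alg \<Rightarrow> bool" where
  "fin_generated ar A \<longleftrightarrow> (\<exists>S. finite S \<and> S \<subseteq> acarrier A \<and> generated ar A S = acarrier A)"

text \<open>Sub X s u stands for s_* u, where s : W(X) -> W(Y) is the homomorphism
  determined by the substitution x |-> s x (x in X) of terms over Y.\<close>
datatype 'f form =
    Eq "'f trm" "'f trm"
  | Neg "'f form"
  | Disj "'f form" "'f form"
  | Conj "'f form" "'f form"
  | Ex nat "'f form"
  | Sub "nat set" "nat \<Rightarrow> 'f trm" "'f form"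

inductive wf_form :: "('f \<Rightarrow> nat) \<Rightarrow> nat set \<Rightarrow> 'f form \<Rightarrow> bool" for ar where
  wf_Eq: "finite X \<Longrightarrow> wf_term ar X w \<Longrightarrow> wf_term ar X w' \<Longrightarrow> wf_form ar X (Eq w w')"
| wf_Neg: "wf_form ar X u \<Longrightarrow> wf_form ar X (Neg u)"
| wf_Disj: "wf_form ar X u \<Longrightarrow> wf_form ar X v \<Longrightarrow> wf_form ar X (Disj u v)"
| wf_Conj: "wf_form ar X u \<Longrightarrow> wf_form ar X v \<Longrightarrow> wf_form ar X (Conj u v)"
| wf_Ex: "wf_form ar X u \<Longrightarrow> x \<in> X \<Longrightarrow> wf_form ar X (Ex x u)"
| wf_Sub: "wf_form ar X u \<Longrightarrow> finite Y \<Longrightarrow> (\<forall>x \<in> X. wf_term ar Y (s x))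
            \<Longrightarrow> wf_form ar Y (Sub X s u)"

text \<open>Truth of a formula at a point (points W(X) -> A are identified with
  assignments of the free generators, by freeness of W(X)).\<close>
primrec sat :: "('f, 'a) alg \<Rightarrow> (nat \<Rightarrow> 'a) \<Rightarrow> 'f form \<Rightarrow> bool" where
  "sat A \<mu> (Eq w w') = (eval A \<mu> w = eval A \<mu> w')"
| "sat A \<mu> (Neg u) = (\<not> sat A \<mu> u)"
| "sat A \<mu> (Disj u v) = (sat A \<mu> u \<or> sat A \<mu> v)"
| "sat A \<mu> (Conj u v) = (sat A \<mu> u \<and> sat A \<mu> v)"
| "sat A \<mu> (Ex x u) = (\<exists>a \<in> acarrier A. sat A (\<mu>(x := a)) u)"
| "sat A \<mu> (Sub X s u) = sat A (\<lambda>v. eval A \<mu> (s v)) u"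

definition LKer :: "('f \<Rightarrow> nat) \<Rightarrow> nat set \<Rightarrow> ('f, 'a) alg \<Rightarrow> (nat \<Rightarrow> 'a) \<Rightarrow> 'f form set" where
  "LKer ar X A \<mu> = {u. wf_form ar X u \<and> sat A \<mu> u}"

definition xtypes :: "('f \<Rightarrow> nat) \<Rightarrow> nat set \<Rightarrow> ('f, 'a) alg \<Rightarrow> 'f form set set" where
  "xtypes ar X A = (\<lambda>\<mu>. LKer ar X A \<mu>) ` (X \<rightarrow>\<^sub>E acarrier A)"

definition isotyped :: "('f \<Rightarrow> nat) \<Rightarrow> ('f, 'a) alg \<Rightarrow> ('f, 'b) alg \<Rightarrow> bool" where
  "isotyped ar A B \<longleftrightarrow> (\<forall>X. finite X \<longrightarrow> xtypes ar X A = xtypes ar X B)"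

end

theory Submission
  imports Defs
begin

lemma wf_mono: "wf_term ar X t \<Longrightarrow> X \<subseteq> Y \<Longrightarrow> wf_term ar Y t"
  by (induction ar X t rule: wf_term.induct) (auto simp: list_all_iff)

lemma eval_local: "wf_term ar X t \<Longrightarrow> \<forall>v\<in>X. \<mu> v = \<mu>' v \<Longrightarrow> eval A \<mu> t = eval A \<mu>' t"
proof (induction ar X t rule: wf_term.induct)
  case (2 ar X f ts)
  then have "map (eval A \<mu>) ts = map (eval A \<mu>') ts" by (intro map_cong) (auto simp: list_all_iff)
  then show ?case by (simp only: eval.simps(2))
qed auto

lemma eval_carrier: "is_alg ar A \<Longrightarrow> wf_term ar X t \<Longrightarrow> \<forall>v\<in>X. \<mu> v \<in> acarrier A
   \<Longrightarrow> eval A \<mu> t \<in> acarrier A"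
proof (induction ar X t rule: wf_term.induct)
  case (2 ar X f ts)
  then have "set (map (eval A \<mu>) ts) \<subseteq> acarrier A" by (auto simp: list_all_iff)
  then show ?case using 2 unfolding is_alg_def by (simp add: list_all_iff)
qed auto

lemma pick_terms:
  assumes "\<forall>a\<in>set as. \<exists>t. wf_term ar X t \<and> eval A \<mu> t = a"
  shows "\<exists>ts. length ts = length as \<and> list_all (wf_term ar X) ts \<and> map (eval A \<mu>) ts = as"
proof -
  define ts where "ts = map (\<lambda>a. SOME t. wf_term ar X t \<and> eval A \<mu> t = a) as"
  have h: "\<And>a. a \<in> set as \<Longrightarrow> wf_term ar X (SOME t. wf_term ar X t \<and> eval A \<mu> t = a)
      \<and> eval A \<mu> (SOME t. wf_term ar X t \<and> eval A \<mu> t = a) = a"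
    using assms by (metis (mono_tags, lifting) someI_ex)
  have "map (eval A \<mu>) ts = as" unfolding ts_def by (simp add: h map_idI)
  moreover have "list_all (wf_term ar X) ts" unfolding ts_def using h by (auto simp: list_all_iff)
  ultimately show ?thesis by (intro exI[of _ ts]) (simp add: ts_def)
qed

lemma gen_terms: "x \<in> generated ar A S \<Longrightarrow> S \<subseteq> \<mu> ` X \<Longrightarrow> \<exists>t. wf_term ar X t \<and> eval A \<mu> t = x"
proof (induction rule: generated.induct)
  case (gen_base x)
  then obtain v where "v \<in> X" "x = \<mu> v" by auto
  then show ?case by (intro exI[of _ "Var v"]) auto
next
  case (gen_op as f)
  then obtain ts where "length ts = length as" "list_all (wf_term ar X) ts" "map (eval A \<mu>) ts = as"
    using pick_terms[of as ar X A \<mu>] by auto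
  then show ?case using gen_op by (intro exI[of _ "App f ts"]) auto
qed

lemma mem_terms_E:
  assumes "m \<in> {eval H \<mu> t |t. wf_term ar X t}"
  obtains t where "wf_term ar X t" "eval H \<mu> t = m" using assms by blast

lemma iso_lemma:
  assumes eqv: "\<And>t t'. wf_term ar X t \<Longrightarrow> wf_term ar X t' \<Longrightarrow>
      (eval A \<alpha> t = eval A \<alpha> t') = (eval B \<beta> t = eval B \<beta> t')"
  shows "isomorphic ar (A\<lparr>acarrier := {eval A \<alpha> t |t. wf_term ar X t}\<rparr>)
                        (B\<lparr>acarrier := {eval B \<beta> t |t. wf_term ar X t}\<rparr>)"
proof -
  define pick where "pick x = (SOME t. wf_term ar X t \<and> eval A \<alpha> t = x)" for x
  define \<chi> where "\<chi> x = eval B \<beta> (pick x)" for x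
  have key: "\<chi> (eval A \<alpha> t) = eval B \<beta> t" if "wf_term ar X t" for t
  proof -
    have "wf_term ar X (pick (eval A \<alpha> t)) \<and> eval A \<alpha> (pick (eval A \<alpha> t)) = eval A \<alpha> t"
      unfolding pick_def by (rule someI[where x=t]) (simp add: that)
    then show ?thesis unfolding \<chi>_def using eqv[of "pick (eval A \<alpha> t)" t] that by simp
  qed
  let ?TA = "{eval A \<alpha> t |t. wf_term ar X t}"
  let ?TB = "{eval B \<beta> t |t. wf_term ar X t}"
  have hom: "is_hom ar (A\<lparr>acarrier := ?TA\<rparr>) (B\<lparr>acarrier := ?TB\<rparr>) \<chi>"
    unfolding is_hom_def
  proof (intro conjI allI impI ballI)
    fix x assume "x \<in> acarrier (A\<lparr>acarrier := ?TA\<rparr>)"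
    then show "\<chi> x \<in> acarrier (B\<lparr>acarrier := ?TB\<rparr>)" using key by auto
  next
    fix f as assume a: "length as = ar f \<and> set as \<subseteq> acarrier (A\<lparr>acarrier := ?TA\<rparr>)"
    then have "\<forall>a\<in>set as. \<exists>t. wf_term ar X t \<and> eval A \<alpha> t = a" by auto
    then obtain ts where ts: "length ts = length as" "list_all (wf_term ar X) ts" "map (eval A \<alpha>) ts = as"
      using pick_terms by blast
    have wf: "wf_term ar X (App f ts)" using ts a by auto
    have "aops A f as = eval A \<alpha> (App f ts)" using ts by simp
    then have "\<chi> (aops A f as) = eval B \<beta> (App f ts)" by (simp only: key[OF wf])
    also have "\<dots> = aops B f (map (eval B \<beta>) ts)" by simp
    also have "map (eval B \<beta>) ts = map \<chi> as"
    proof -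
      have "map \<chi> as = map (\<chi> \<circ> eval A \<alpha>) ts" by (simp flip: ts(3))
      also have "\<dots> = map (eval B \<beta>) ts" using ts(2) key by (intro map_cong) (auto simp: list_all_iff)
      finally show ?thesis by simp
    qed
    finally show "\<chi> (aops (A\<lparr>acarrier := ?TA\<rparr>) f as) = aops (B\<lparr>acarrier := ?TB\<rparr>) f (map \<chi> as)"
      by simp
  qed
  have "bij_betw \<chi> ?TA ?TB"
    unfolding bij_betw_def
  proof
    show "inj_on \<chi> ?TA"
    proof (rule inj_onI)
      fix x y assume "x \<in> ?TA" "y \<in> ?TA" "\<chi> x = \<chi> y"
      then obtain t t' where tt: "wf_term ar X t" "wf_term ar X t'" "x = eval A \<alpha> t" "y = eval A \<alpha> t'"
        "\<chi> x = \<chi> y" by auto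
      then have "eval B \<beta> t = eval B \<beta> t'" using key[OF tt(1)] key[OF tt(2)] by simp
      then show "x = y" using eqv[OF tt(1,2)] tt(3,4) by simp
    qed
    show "\<chi> ` ?TA = ?TB"
    proof
      show "\<chi> ` ?TA \<subseteq> ?TB" using key by auto
      show "?TB \<subseteq> \<chi> ` ?TA"
      proof
        fix y assume "y \<in> ?TB"
        then obtain t where t: "wf_term ar X t" "y = eval B \<beta> t" by auto
        then have "y = \<chi> (eval A \<alpha> t)" using key by simp
        then show "y \<in> \<chi> ` ?TA" using t by auto
      qed
    qed
  qed
  then show ?thesis using hom unfolding isomorphic_def by auto
qed

theorem mainTheorem7:
  fixes ar :: "'f \<Rightarrow> nat"
    and E :: "('f trm \<times> 'f trm) set"
    and H :: "('f, 'a) alg"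
    and G :: "('f, 'b) alg"
  assumes "variety ar E"
    and "in_variety ar E H"
    and "fin_generated ar H"
    and "no_proper_iso_subalg ar H"
    and "in_variety ar E G"
    and "isotyped ar G H"
  shows "isomorphic ar G H"
proof -
  have algH: "is_alg ar H" and algG: "is_alg ar G"
    using assms unfolding in_variety_def by auto
  obtain S where S: "finite S" "S \<subseteq> acarrier H" "generated ar H S = acarrier H"
    using assms(3) unfolding fin_generated_def by auto
  obtain h where h: "bij_betw h {0..<card S} S" using ex_bij_betw_nat_finite[OF S(1)] by auto
  define n where "n = card S"
  define X where "X = {0..<n}"
  define \<mu> where "\<mu> = restrict h X"
  have finX: "finite X" unfolding X_def by simp
  have nX: "n \<notin> X" unfolding X_def by simp
  have SX: "S = \<mu> ` X" using h unfolding \<mu>_def X_def n_def bij_betw_def by auto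
  have muPi: "\<mu> \<in> X \<rightarrow>\<^sub>E acarrier H" using SX S(2) unfolding \<mu>_def by auto
  have muC: "\<forall>v\<in>X. \<mu> v \<in> acarrier H" using muPi by auto
  have TH: "{eval H \<mu> t |t. wf_term ar X t} = acarrier H"
  proof
    show "{eval H \<mu> t |t. wf_term ar X t} \<subseteq> acarrier H" using eval_carrier[OF algH] muC by auto
    show "acarrier H \<subseteq> {eval H \<mu> t |t. wf_term ar X t}"
    proof
      fix x assume "x \<in> acarrier H"
      then have "x \<in> generated ar H S" using S(3) by simp
      then obtain t where "wf_term ar X t" "eval H \<mu> t = x" using gen_terms[of x ar H S \<mu> X] SX by auto
      then show "x \<in> {eval H \<mu> t |t. wf_term ar X t}" by auto
    qed
  qed
  have xt: "\<And>Y. finite Y \<Longrightarrow> xtypes ar Y G = xtypes ar Y H"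
    using assms(6) unfolding isotyped_def by auto
  have "LKer ar X H \<mu> \<in> xtypes ar X G" using xt[OF finX] muPi unfolding xtypes_def by auto
  then obtain \<nu> where nuPi: "\<nu> \<in> X \<rightarrow>\<^sub>E acarrier G" and nuK: "LKer ar X G \<nu> = LKer ar X H \<mu>"
    unfolding xtypes_def by auto
  have eqvG: "(eval G \<nu> t = eval G \<nu> t') = (eval H \<mu> t = eval H \<mu> t')"
    if "wf_term ar X t" "wf_term ar X t'" for t t'
  proof -
    have "wf_form ar X (Eq t t')" using finX that by (rule wf_Eq)
    then have "(Eq t t' \<in> LKer ar X G \<nu>) = (Eq t t' \<in> LKer ar X H \<mu>)" using nuK by simp
    then show ?thesis using \<open>wf_form ar X (Eq t t')\<close> unfolding LKer_def by simp
  qed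
  have TG: "{eval G \<nu> t |t. wf_term ar X t} = acarrier G"
  proof
    show "{eval G \<nu> t |t. wf_term ar X t} \<subseteq> acarrier G"
      using eval_carrier[OF algG] nuPi by auto
    show "acarrier G \<subseteq> {eval G \<nu> t |t. wf_term ar X t}"
    proof
      fix g assume g: "g \<in> acarrier G"
      define X' where "X' = insert n X"
      define \<nu>' where "\<nu>' = \<nu>(n := g)"
      have finX': "finite X'" using finX unfolding X'_def by simp
      have XX': "X \<subseteq> X'" unfolding X'_def by auto
      have nu'Pi: "\<nu>' \<in> X' \<rightarrow>\<^sub>E acarrier G"
        using nuPi g nX unfolding \<nu>'_def X'_def PiE_def extensional_def by auto
      have agree: "\<forall>v\<in>X. \<nu>' v = \<nu> v" using nX unfolding \<nu>'_def by auto
      have "LKer ar X' G \<nu>' \<in> xtypes ar X' H" using xt[OF finX'] nu'Pi unfolding xtypes_def by auto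
      then obtain \<mu>'' where mu''Pi: "\<mu>'' \<in> X' \<rightarrow>\<^sub>E acarrier H"
        and mu''K: "LKer ar X' H \<mu>'' = LKer ar X' G \<nu>'"
        unfolding xtypes_def by auto
      have eqK: "(eval H \<mu>'' t = eval H \<mu>'' t') = (eval G \<nu>' t = eval G \<nu>' t')"
        if "wf_term ar X' t" "wf_term ar X' t'" for t t'
      proof -
        have "wf_form ar X' (Eq t t')" using finX' that by (rule wf_Eq)
        then have "(Eq t t' \<in> LKer ar X' H \<mu>'') = (Eq t t' \<in> LKer ar X' G \<nu>')" using mu''K by simp
    then show ?thesis using \<open>wf_form ar X' (Eq t t')\<close> unfolding LKer_def by simp
      qed
      have eqv2: "(eval H \<mu>'' t = eval H \<mu>'' t') = (eval H \<mu> t = eval H \<mu> t')"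
        if "wf_term ar X t" "wf_term ar X t'" for t t'
      proof -
        have "(eval H \<mu>'' t = eval H \<mu>'' t') = (eval G \<nu>' t = eval G \<nu>' t')"
          using eqK wf_mono[OF that(1) XX'] wf_mono[OF that(2) XX'] by blast
        also have "\<dots> = (eval G \<nu> t = eval G \<nu> t')"
          using eval_local[OF that(1) agree] eval_local[OF that(2) agree] by simp
        finally show ?thesis using eqvG that by simp
      qed
      define S' where "S' = {eval H \<mu>'' t |t. wf_term ar X t}"
      have iso: "isomorphic ar (H\<lparr>acarrier := S'\<rparr>) H"
        using iso_lemma[of ar X H \<mu>'' H \<mu>, OF eqv2] TH unfolding S'_def by simp
      have mu''C: "\<forall>v\<in>X. \<mu>'' v \<in> acarrier H" using mu''Pi XX' by auto
      have sub: "subalg ar S' H"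
        unfolding subalg_def
      proof (intro conjI allI impI)
        show "S' \<subseteq> acarrier H" unfolding S'_def using eval_carrier[OF algH] mu''C by auto
      next
        fix f as assume a: "length as = ar f \<and> set as \<subseteq> S'"
        then have "\<forall>a\<in>set as. \<exists>t. wf_term ar X t \<and> eval H \<mu>'' t = a" unfolding S'_def by auto
        then obtain ts where ts: "length ts = length as" "list_all (wf_term ar X) ts"
          "map (eval H \<mu>'') ts = as"
          using pick_terms by blast
        have "aops H f as = eval H \<mu>'' (App f ts)" using ts by simp
        moreover have "wf_term ar X (App f ts)" using ts a by auto
        ultimately show "aops H f as \<in> S'" unfolding S'_def by blast
      qed
      have "S' = acarrier H"
      proof (rule ccontr)
        assume "S' \<noteq> acarrier H"
        then have "\<not> isomorphic ar (H\<lparr>acarrier := S'\<rparr>) H"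
          using assms(4) sub unfolding no_proper_iso_subalg_def by simp
        then show False using iso by simp
      qed
      moreover have "\<mu>'' n \<in> acarrier H" using mu''Pi unfolding X'_def by auto
      ultimately have "\<mu>'' n \<in> S'" by simp
      then have "\<mu>'' n \<in> {eval H \<mu>'' t |t. wf_term ar X t}" by (simp only: S'_def)
      then obtain t where t: "wf_term ar X t" "eval H \<mu>'' t = \<mu>'' n" by (rule mem_terms_E)
      have "wf_term ar X' (Var n)" unfolding X'_def by simp
      moreover have "wf_term ar X' t" using wf_mono[OF t(1) XX'] .
      ultimately have "(eval H \<mu>'' (Var n) = eval H \<mu>'' t) = (eval G \<nu>' (Var n) = eval G \<nu>' t)"
        using eqK by blast
      then have "g = eval G \<nu>' t" using t unfolding \<nu>'_def by simp
      also have "\<dots> = eval G \<nu> t" using eval_local[OF t(1) agree] .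
      finally show "g \<in> {eval G \<nu> t |t. wf_term ar X t}" using t(1) by auto
    qed
  qed
  show ?thesis
    using iso_lemma[of ar X G \<nu> H \<mu>, OF eqvG] TG TH by simp
qed

end
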